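(* Let $\{(X_m,d_m,f_m)\}_{m\in\mathbb{N}}$ be a sequence of dynamical systems with each metric $d_m$ bounded by 1, and let $g_m:X_{m+1}\to X_m$ be uniformly continuous bonding maps with $f_m\circ g_m=g_m\circ f_{m+1}$ for all $m$. Suppose the inverse system $(g_m,X_m)$ satisfies the Mittag-Leffler Condition. (i) If every $(X_m,d_m,f_m)$ has the shadowing property, then the inverse limit dynamical system $(\varprojlim(g_m,X_m),d_\Pi,(f_m)^* )$ has the shadowing property. (ii) If every $(X_m,d_m,f_m)$ has the finite shadowing property, then $(\varprojlim(g_m,X_m),d_\Pi,(f_m)^* )$ has the finite shadowing property.
   Context: A dynamical system $(X,d,f)$ is a separable metric space with a continuous self-map. $\varprojlim(g_m,X_m)=\{(x_m)\in\prod_mX_m: x_m=g_m(x_{m+1})\ \forall m\}$ with metric $d_\Pi((x_m),(y_m))=\max_m d_m(x_m,y_m)/(m+1)$, and $(f_m)^*$ is the restriction of the product map $(x_m)\mapsto(f_m(x_m))$. The Mittag-Leffler Condition: for every $N$ there is $k>N$ with $g_N\circ\cdots\circ g_k(X_{k+1})=g_N\circ\cdots\circ g_i(X_{i+1})$ for all $i\ge k$. A $\delta$-pseudo-orbit of $f$ is a (finite or infinite) sequence $(x_n)$ with $d(f(x_n),x_{n+1})<\delta$; $x$ $\varepsilon$-shadows it if $d(f^n(x),x_n)<\varepsilon$ for all indices. Finite shadowing property: for every $\varepsilon>0$ there is $\delta>0$ such that every finite $\delta$-pseudo-orbit is $\varepsilon$-shadowed by some point; shadowing property: same for infinite pseudo-orbits.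 *)

theory Defs
  imports "HOL-Analysis.Analysis"
begin

definition dyn_sys :: "'a metric \<Rightarrow> ('a \<Rightarrow> 'a) \<Rightarrow> bool" where
  "dyn_sys X f \<longleftrightarrow> separable_space (mtopology_of X) \<and>
     continuous_map (mtopology_of X) (mtopology_of X) f"

definition finite_shadowing :: "'a set \<Rightarrow> ('a \<Rightarrow> 'a \<Rightarrow> real) \<Rightarrow> ('a \<Rightarrow> 'a) \<Rightarrow> bool" where
  "finite_shadowing S d f \<longleftrightarrow>
    (\<forall>\<epsilon>>0. \<exists>\<delta>>0. \<forall>(n::nat) (xs::nat \<Rightarrow> 'a).
       (\<forall>i\<le>n. xs i \<in> S) \<and> (\<forall>i<n. d (f (xs i)) (xs (Suc i)) < \<delta>) \<longrightarrow>
       (\<exists>x\<in>S. \<forall>i\<le>n. d ((f ^^ i) x) (xs i) < \<epsilon>))"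

definition shadowing :: "'a set \<Rightarrow> ('a \<Rightarrow> 'a \<Rightarrow> real) \<Rightarrow> ('a \<Rightarrow> 'a) \<Rightarrow> bool" where
  "shadowing S d f \<longleftrightarrow>
    (\<forall>\<epsilon>>0. \<exists>\<delta>>0. \<forall>xs::nat \<Rightarrow> 'a.
       (\<forall>i. xs i \<in> S) \<and> (\<forall>i. d (f (xs i)) (xs (Suc i)) < \<delta>) \<longrightarrow>
       (\<exists>x\<in>S. \<forall>i. d ((f ^^ i) x) (xs i) < \<epsilon>))"

text \<open>bond g N k = g_N o g_(N+1) o ... o g_(N+k-1), a map X_(N+k) -> X_N.\<close>
fun bond :: "(nat \<Rightarrow> 'a \<Rightarrow> 'a) \<Rightarrow> nat \<Rightarrow> nat \<Rightarrow> 'a \<Rightarrow> 'a" where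
  "bond g N 0 = id"
| "bond g N (Suc k) = bond g N k \<circ> g (N + k)"

text \<open>Mittag-Leffler: for every N there is k > N with
  g_N o ... o g_k (X_(k+1)) = g_N o ... o g_i (X_(i+1)) for all i >= k.\<close>
definition mittag_leffler :: "(nat \<Rightarrow> 'a metric) \<Rightarrow> (nat \<Rightarrow> 'a \<Rightarrow> 'a) \<Rightarrow> bool" where
  "mittag_leffler X g \<longleftrightarrow>
    (\<forall>N. \<exists>k>N. \<forall>i\<ge>k.
       bond g N (Suc k - N) ` mspace (X (Suc k)) = bond g N (Suc i - N) ` mspace (X (Suc i)))"

definition inv_lim :: "(nat \<Rightarrow> 'a metric) \<Rightarrow> (nat \<Rightarrow> 'a \<Rightarrow> 'a) \<Rightarrow> (nat \<Rightarrow> 'a) set" where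
  "inv_lim X g = {x. (\<forall>m. x m \<in> mspace (X m)) \<and> (\<forall>m. x m = g m (x (Suc m)))}"

text \<open>d_Pi(x,y) = max_m d_m(x_m,y_m)/(m+1); the max exists for bounded metrics, so it equals the sup.\<close>
definition inv_lim_dist :: "(nat \<Rightarrow> 'a metric) \<Rightarrow> (nat \<Rightarrow> 'a) \<Rightarrow> (nat \<Rightarrow> 'a) \<Rightarrow> real" where
  "inv_lim_dist X x y = (SUP m. mdist (X m) (x m) (y m) / real (m + 1))"

definition prod_map :: "(nat \<Rightarrow> 'a \<Rightarrow> 'a) \<Rightarrow> (nat \<Rightarrow> 'a) \<Rightarrow> (nat \<Rightarrow> 'a)" where
  "prod_map f x = (\<lambda>m. f m (x m))"

end

theory Submission imports Defs begin

lemma bond_add: "bond g m (a + b) = bond g m a \<circ> bond g (m + a) b"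
  by (induction b) (auto simp: o_assoc add.assoc)

lemma bond_Suc_left: "bond g m (Suc t) = g m \<circ> bond g (Suc m) t"
  using bond_add[of g m 1 t] by simp

lemma prod_pow: "(prod_map f ^^ i) z m = (f m ^^ i) (z m)"
  by (induction i) (auto simp: prod_map_def)

lemma inv_lim_bond: "z \<in> inv_lim X g \<Longrightarrow> z m = bond g m j (z (m + j))"
proof (induction j)
  case (Suc j)
  assume z: "z \<in> inv_lim X g"
  have "z (m + j) = g (m + j) (z (Suc (m + j)))" using z unfolding inv_lim_def by blast
  then show ?case using Suc z by simp
qed simp

locale ils =
  fixes X :: "nat \<Rightarrow> 'a metric" and f g :: "nat \<Rightarrow> 'a \<Rightarrow> 'a"
  assumes fmap: "\<And>m x. x \<in> mspace (X m) \<Longrightarrow> f m x \<in> mspace (X m)"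
    and bdd: "\<And>m x y. x \<in> mspace (X m) \<Longrightarrow> y \<in> mspace (X m) \<Longrightarrow> mdist (X m) x y \<le> 1"
    and ucont: "\<And>m. uniformly_continuous_map (X (Suc m)) (X m) (g m)"
    and comm: "\<And>m x. x \<in> mspace (X (Suc m)) \<Longrightarrow> f m (g m x) = g m (f (Suc m) x)"
begin

lemma gmap: "x \<in> mspace (X (Suc m)) \<Longrightarrow> g m x \<in> mspace (X m)"
  using ucont[of m] unfolding uniformly_continuous_map_def by auto

lemma bond_map: "y \<in> mspace (X (m + j)) \<Longrightarrow> bond g m j y \<in> mspace (X m)"
  by (induction j arbitrary: y) (auto intro!: gmap)

lemma bond_uc: "uniformly_continuous_map (X (m + j)) (X m) (bond g m j)"
proof (induction j)
  case 0
  then show ?case using uniformly_continuous_map_id[of "X m"] by (simp add: id_def)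
next
  case (Suc j)
  then show ?case using uniformly_continuous_map_compose[OF ucont[of "m+j"] Suc] by (simp add: o_def)
qed

lemma fpow_map: "y \<in> mspace (X m) \<Longrightarrow> (f m ^^ i) y \<in> mspace (X m)"
  by (induction i) (auto intro: fmap)

lemma bond_f: "y \<in> mspace (X (m + j)) \<Longrightarrow> f m (bond g m j y) = bond g m j (f (m + j) y)"
proof (induction j arbitrary: y)
  case (Suc j)
  have "g (m+j) y \<in> mspace (X (m+j))" using Suc.prems gmap by simp
  then have "f m (bond g m j (g (m+j) y)) = bond g m j (f (m+j) (g (m+j) y))" using Suc.IH by blast
  also have "\<dots> = bond g m j (g (m+j) (f (Suc (m+j)) y))" using comm Suc.prems by simp
  finally show ?case by simp
qed simp

lemma bond_fpow: "y \<in> mspace (X (m + j)) \<Longrightarrow> (f m ^^ i) (bond g m j y) = bond g m j ((f (m + j) ^^ i) y)"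
proof (induction i)
  case (Suc i)
  then show ?case using bond_f[OF fpow_map[OF Suc.prems, of i]] by simp
qed simp

lemma dist_le: "(\<And>m. p m \<in> mspace (X m)) \<Longrightarrow> (\<And>m. q m \<in> mspace (X m)) \<Longrightarrow>
   mdist (X M) (p M) (q M) / real (M+1) \<le> inv_lim_dist X p q"
  unfolding inv_lim_dist_def
proof (rule cSUP_upper)
  assume p: "\<And>m. p m \<in> mspace (X m)" and q: "\<And>m. q m \<in> mspace (X m)"
  show "bdd_above (range (\<lambda>m. mdist (X m) (p m) (q m) / real (m + 1)))"
  proof (rule bdd_aboveI2[where M=1])
    fix m
    have "mdist (X m) (p m) (q m) \<le> 1" using bdd p q by blast
    moreover have "0 \<le> mdist (X m) (p m) (q m)" by simp
    ultimately show "mdist (X m) (p m) (q m) / real (m + 1) \<le> 1"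
      by (simp add: divide_le_eq)
  qed
qed simp

lemma finite_uc:
  assumes "N \<le> M" "\<epsilon> > 0"
  shows "\<exists>\<eta>>0. \<forall>a\<in>mspace (X M). \<forall>b\<in>mspace (X M). mdist (X M) a b < \<eta> \<longrightarrow>
     (\<forall>m\<le>N. mdist (X m) (bond g m (M - m) a) (bond g m (M - m) b) < \<epsilon>)"
  using assms(1)
proof (induction N)
  case 0
  have "uniformly_continuous_map (X M) (X 0) (bond g 0 (M - 0))" using bond_uc[of 0 M] by simp
  then obtain \<eta> where "\<eta> > 0" "\<forall>a\<in>mspace (X M). \<forall>b\<in>mspace (X M). mdist (X M) b a < \<eta> \<longrightarrow>
     mdist (X 0) (bond g 0 (M - 0) b) (bond g 0 (M - 0) a) < \<epsilon>"
    unfolding uniformly_continuous_map_def using assms(2) by meson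
  then show ?case by auto
next
  case (Suc N)
  then obtain \<eta>1 where e1: "\<eta>1 > 0" "\<forall>a\<in>mspace (X M). \<forall>b\<in>mspace (X M). mdist (X M) a b < \<eta>1 \<longrightarrow>
     (\<forall>m\<le>N. mdist (X m) (bond g m (M - m) a) (bond g m (M - m) b) < \<epsilon>)" by auto
  have "uniformly_continuous_map (X M) (X (Suc N)) (bond g (Suc N) (M - Suc N))"
    using bond_uc[of "Suc N" "M - Suc N"] Suc.prems by simp
  then obtain \<eta>2 where e2: "\<eta>2 > 0" "\<forall>a\<in>mspace (X M). \<forall>b\<in>mspace (X M). mdist (X M) b a < \<eta>2 \<longrightarrow>
     mdist (X (Suc N)) (bond g (Suc N) (M - Suc N) b) (bond g (Suc N) (M - Suc N) a) < \<epsilon>"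
    unfolding uniformly_continuous_map_def using assms(2) by meson
  show ?case
  proof (intro exI[of _ "min \<eta>1 \<eta>2"] conjI ballI impI allI)
    show "0 < min \<eta>1 \<eta>2" using e1(1) e2(1) by simp
    fix a b m assume ab: "a \<in> mspace (X M)" "b \<in> mspace (X M)" "mdist (X M) a b < min \<eta>1 \<eta>2" "m \<le> Suc N"
    show "mdist (X m) (bond g m (M - m) a) (bond g m (M - m) b) < \<epsilon>"
    proof (cases "m \<le> N")
      case True
      have "mdist (X M) a b < \<eta>1" using ab(3) by simp
      then show ?thesis using e1(2) ab(1,2) True by blast
    next
      case False then have m: "m = Suc N" using ab by simp
      have "mdist (X M) a b < \<eta>2" using ab(3) by simp
      then show ?thesis unfolding m using e2(2) ab(1,2) by blast
    qed
  qed
qed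


context
  fixes kk S
  assumes mlc: "mittag_leffler X g"
  defines "kk \<equiv> \<lambda>N. SOME k. k > N \<and> (\<forall>i\<ge>k.
       bond g N (Suc k - N) ` mspace (X (Suc k)) = bond g N (Suc i - N) ` mspace (X (Suc i)))"
  defines "S \<equiv> \<lambda>n. bond g n (Suc (kk n) - n) ` mspace (X (Suc (kk n)))"
begin

lemma kk: "kk N > N \<and> (\<forall>i\<ge>kk N.
       bond g N (Suc (kk N) - N) ` mspace (X (Suc (kk N))) = bond g N (Suc i - N) ` mspace (X (Suc i)))"
proof -
  have "\<exists>k. k > N \<and> (\<forall>i\<ge>k.
       bond g N (Suc k - N) ` mspace (X (Suc k)) = bond g N (Suc i - N) ` mspace (X (Suc i)))"
    using mlc unfolding mittag_leffler_def by blast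
  then show ?thesis unfolding kk_def by (rule someI_ex)
qed

lemma S_stable:
  assumes "j \<ge> Suc (kk n)"
  shows "S n = bond g n (j - n) ` mspace (X j)"
proof -
  obtain i where i: "j = Suc i" "i \<ge> kk n" using assms by (cases j) auto
  have "S n = bond g n (Suc i - n) ` mspace (X (Suc i))" unfolding S_def using kk[of n] i(2) by blast
  then show ?thesis using i(1) by simp
qed

lemma S_sub: "S n \<subseteq> mspace (X n)"
proof -
  have "n + (Suc (kk n) - n) = Suc (kk n)" using kk[of n] by simp
  then show ?thesis unfolding S_def using bond_map[of _ n "Suc (kk n) - n"] by auto
qed

lemma g_S: "g n ` S (Suc n) = S n"
proof -
  define j where "j = Suc (kk n) + Suc (kk (Suc n))"
  have j1: "j \<ge> Suc (kk n)" "j \<ge> Suc (kk (Suc n))" unfolding j_def by auto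
  have "n < j" using kk[of n] j1 by linarith
  then have "j - n = Suc (j - Suc n)" by arith
  then have "bond g n (j - n) = g n \<circ> bond g (Suc n) (j - Suc n)" by (simp only: bond_Suc_left)
  then have "S n = (g n \<circ> bond g (Suc n) (j - Suc n)) ` mspace (X j)" by (simp only: S_stable[OF j1(1)])
  also have "\<dots> = g n ` (bond g (Suc n) (j - Suc n) ` mspace (X j))" by (simp only: image_comp)
  also have "\<dots> = g n ` S (Suc n)" by (simp only: S_stable[OF j1(2)])
  finally show ?thesis by (rule sym)
qed

lemma lift:
  assumes p: "p \<in> S N"
  shows "\<exists>z\<in>inv_lim X g. z N = p"
proof -
  define w where "w = rec_nat p (\<lambda>t wt. SOME y. y \<in> S (Suc (N+t)) \<and> g (N+t) y = wt)"
  have w0: "w 0 = p" unfolding w_def by simp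
  have wS: "w (Suc t) = (SOME y. y \<in> S (Suc (N+t)) \<and> g (N+t) y = w t)" for t
    unfolding w_def by simp
  have wprop: "w t \<in> S (N + t) \<and> (w (Suc t) \<in> S (Suc (N+t)) \<and> g (N+t) (w (Suc t)) = w t)" for t
  proof (induction t)
    case 0
    have "\<exists>y. y \<in> S (Suc (N+0)) \<and> g (N+0) y = w 0" using g_S[of N] p w0 by (metis add_0_right imageE)
    then show ?case using w0 p wS[of 0] someI_ex by (metis (mono_tags, lifting) add_0_right)
  next
    case (Suc t)
    then have "w (Suc t) \<in> S (N + Suc t)" by simp
    then have "\<exists>y. y \<in> S (Suc (N+Suc t)) \<and> g (N+Suc t) y = w (Suc t)" using g_S[of "N + Suc t"]
      by (metis imageE)
    then show ?case using wS[of "Suc t"] someI_ex \<open>w (Suc t) \<in> S (N + Suc t)\<close>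
      by (metis (mono_tags, lifting))
  qed
  define z where "z = (\<lambda>m. if N \<le> m then w (m - N) else bond g m (N - m) p)"
  have pm: "p \<in> mspace (X N)" using p S_sub by auto
  have zm: "z m \<in> mspace (X m)" for m
  proof (cases "N \<le> m")
    case True then show ?thesis using wprop[of "m - N"] S_sub unfolding z_def by auto
  next
    case False then show ?thesis using bond_map[of p m "N - m"] pm unfolding z_def by auto
  qed
  have zg: "z m = g m (z (Suc m))" for m
  proof (cases "N \<le> m")
    case True
    then have "Suc m - N = Suc (m - N)" "N + (m - N) = m" by auto
    then show ?thesis using True wprop[of "m - N"] unfolding z_def by auto
  next
    case False
    then have "N - m = Suc (N - Suc m)" by simp
    then have "bond g m (N - m) = g m \<circ> bond g (Suc m) (N - Suc m)"
      by (simp only: bond_Suc_left)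
    then have "bond g m (N - m) p = g m (bond g (Suc m) (N - Suc m) p)"
      by (metis comp_apply)
    moreover have "z (Suc m) = bond g (Suc m) (N - Suc m) p"
      unfolding z_def using False w0 by (cases "N = Suc m") auto
    ultimately show ?thesis using False unfolding z_def by simp
  qed
  have "z \<in> inv_lim X g" unfolding inv_lim_def mem_Collect_eq using zm zg by blast
  moreover have "z N = p" unfolding z_def using w0 by simp
  ultimately show ?thesis by blast
qed

lemma key:
  assumes "\<epsilon> > 0"
  shows "\<exists>M \<eta>. \<eta> > 0 \<and> (\<forall>y\<in>mspace (X M). \<exists>z\<in>inv_lim X g. \<forall>p\<in>inv_lim X g. \<forall>i.
     mdist (X M) ((f M ^^ i) y) (p M) < \<eta> \<longrightarrow> inv_lim_dist X ((prod_map f ^^ i) z) p < \<epsilon>)"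
proof -
  obtain N where N: "inverse (real (Suc N)) < \<epsilon>/2" using reals_Archimedean assms
    by (metis half_gt_zero)
  define M where "M = Suc (kk N)"
  have NM: "N \<le> M" using kk[of N] unfolding M_def by simp
  obtain \<eta> where eta: "\<eta> > 0" "\<forall>a\<in>mspace (X M). \<forall>b\<in>mspace (X M). mdist (X M) a b < \<eta> \<longrightarrow>
     (\<forall>m\<le>N. mdist (X m) (bond g m (M - m) a) (bond g m (M - m) b) < \<epsilon>/2)"
    using finite_uc[OF NM, of "\<epsilon>/2"] assms by auto
  have "\<exists>z\<in>inv_lim X g. \<forall>p\<in>inv_lim X g. \<forall>i.
     mdist (X M) ((f M ^^ i) y) (p M) < \<eta> \<longrightarrow> inv_lim_dist X ((prod_map f ^^ i) z) p < \<epsilon>"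
    if y: "y \<in> mspace (X M)" for y
  proof -
    have "bond g N (M - N) y \<in> S N" unfolding S_def M_def using y M_def by auto
    then obtain z where z: "z \<in> inv_lim X g" "z N = bond g N (M - N) y" using lift by blast
    have zin: "z m \<in> mspace (X m)" for m using z(1) unfolding inv_lim_def by blast
    show ?thesis
    proof (intro bexI[OF _ z(1)] ballI allI impI)
      fix p i assume p: "p \<in> inv_lim X g" and d: "mdist (X M) ((f M ^^ i) y) (p M) < \<eta>"
      have pin: "p m \<in> mspace (X m)" for m using p unfolding inv_lim_def by blast
      have "inv_lim_dist X ((prod_map f ^^ i) z) p \<le> \<epsilon>/2"
        unfolding inv_lim_dist_def
      proof (rule cSUP_least)
        fix m
        show "mdist (X m) ((prod_map f ^^ i) z m) (p m) / real (m + 1) \<le> \<epsilon> / 2"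
        proof (cases "m \<le> N")
          case True
          have e1: "m + (N - m) = N" "(N - m) + (M - N) = M - m" "m + (M - m) = M"
            using True NM by auto
          have "z m = bond g m (N - m) (z N)" using inv_lim_bond[OF z(1), of m "N - m"] e1 by simp
          also have "\<dots> = bond g m (M - m) y" using z(2) bond_add[of g m "N - m" "M - N"] e1 by simp
          finally have zm: "z m = bond g m (M - m) y" .
          have pm: "p m = bond g m (M - m) (p M)" using inv_lim_bond[OF p, of m "M - m"] e1 by simp
          have "(prod_map f ^^ i) z m = (f m ^^ i) (z m)" by (rule prod_pow)
          also have "\<dots> = (f m ^^ i) (bond g m (M - m) y)" using zm by simp
          also have "\<dots> = bond g m (M - m) ((f M ^^ i) y)"
            using bond_fpow[of y m "M - m" i] e1(3) y by simp
          finally have fz: "(prod_map f ^^ i) z m = bond g m (M - m) ((f M ^^ i) y)" .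
          have "mdist (X m) (bond g m (M - m) ((f M ^^ i) y)) (bond g m (M - m) (p M)) < \<epsilon>/2"
            by (rule eta(2)[rule_format, OF fpow_map[OF y, of i] pin[of M] d True])
          then have dl: "mdist (X m) ((prod_map f ^^ i) z m) (p m) < \<epsilon>/2"
            by (simp only: fz pm)
          have d0: "0 \<le> mdist (X m) ((prod_map f ^^ i) z m) (p m)" by simp
          have "mdist (X m) ((prod_map f ^^ i) z m) (p m) \<le> mdist (X m) ((prod_map f ^^ i) z m) (p m) * real (m+1)"
            using mult_left_mono[OF _ d0, of 1 "real (m+1)"] by simp
          then have "mdist (X m) ((prod_map f ^^ i) z m) (p m) / real (m+1) \<le> mdist (X m) ((prod_map f ^^ i) z m) (p m)"
            by (simp add: divide_le_eq)
          then show ?thesis using dl by linarith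
        next
          case False
          have a: "(prod_map f ^^ i) z m \<in> mspace (X m)"
            unfolding prod_pow by (rule fpow_map[OF zin])
          have "mdist (X m) ((prod_map f ^^ i) z m) (p m) \<le> 1"
            by (rule bdd[OF a pin])
          then have "mdist (X m) ((prod_map f ^^ i) z m) (p m) / real (m + 1) \<le> 1 / real (m+1)"
            by (simp add: divide_right_mono)
          also have "\<dots> \<le> 1 / real (Suc N)"
            by (rule divide_left_mono) (use False in auto)
          also have "\<dots> = inverse (real (Suc N))" by (simp add: inverse_eq_divide)
          finally show ?thesis using N by linarith
        qed
      qed simp
      then show "inv_lim_dist X ((prod_map f ^^ i) z) p < \<epsilon>" using assms by simp
    qed
  qed
  then show ?thesis using eta(1) by blast
qed

end

end

theorem theorem4p7:
  fixes X :: "nat \<Rightarrow> 'a metric" and f g :: "nat \<Rightarrow> 'a \<Rightarrow> 'a"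
  assumes dyn: "\<And>m. dyn_sys (X m) (f m)"
    and bdd: "\<And>m x y. x \<in> mspace (X m) \<Longrightarrow> y \<in> mspace (X m) \<Longrightarrow> mdist (X m) x y \<le> 1"
    and ucont: "\<And>m. uniformly_continuous_map (X (Suc m)) (X m) (g m)"
    and comm: "\<And>m x. x \<in> mspace (X (Suc m)) \<Longrightarrow> f m (g m x) = g m (f (Suc m) x)"
    and mlc: "mittag_leffler X g"
  shows "((\<forall>m. shadowing (mspace (X m)) (mdist (X m)) (f m)) \<longrightarrow>
            shadowing (inv_lim X g) (inv_lim_dist X) (prod_map f))
       \<and> ((\<forall>m. finite_shadowing (mspace (X m)) (mdist (X m)) (f m)) \<longrightarrow>
            finite_shadowing (inv_lim X g) (inv_lim_dist X) (prod_map f))"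
proof -
  have fmap: "f m x \<in> mspace (X m)" if "x \<in> mspace (X m)" for m x
    using dyn[of m] that unfolding dyn_sys_def continuous_map_def by auto
  interpret ils X f g using fmap bdd ucont comm by unfold_locales auto
  have inl: "\<And>p m. p \<in> inv_lim X g \<Longrightarrow> p m \<in> mspace (X m)" unfolding inv_lim_def by blast
  have pd: "mdist (X M) (f M (p M)) (q M) < (real M + 1) * \<delta>"
    if "p \<in> inv_lim X g" "q \<in> inv_lim X g" "inv_lim_dist X (prod_map f p) q < \<delta>" for p q M \<delta>
  proof -
    have "mdist (X M) (prod_map f p M) (q M) / real (M+1) \<le> inv_lim_dist X (prod_map f p) q"
      by (rule dist_le) (use that inl fmap in \<open>auto simp: prod_map_def\<close>)
    then have "mdist (X M) (f M (p M)) (q M) / real (M+1) < \<delta>" using that(3) by (simp add: prod_map_def)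
    then show ?thesis by (simp add: divide_less_eq algebra_simps)
  qed
  show ?thesis
  proof (intro conjI impI)
    assume sh: "\<forall>m. shadowing (mspace (X m)) (mdist (X m)) (f m)"
    show "shadowing (inv_lim X g) (inv_lim_dist X) (prod_map f)"
      unfolding shadowing_def
    proof (intro allI impI)
      fix \<epsilon> :: real assume e: "\<epsilon> > 0"
      obtain M \<eta> where eta: "\<eta> > 0" "\<forall>y\<in>mspace (X M). \<exists>z\<in>inv_lim X g. \<forall>p\<in>inv_lim X g. \<forall>i.
         mdist (X M) ((f M ^^ i) y) (p M) < \<eta> \<longrightarrow> inv_lim_dist X ((prod_map f ^^ i) z) p < \<epsilon>"
        using key[OF mlc e] by blast
      obtain \<delta> where d: "\<delta> > 0" "\<forall>xs. (\<forall>i. xs i \<in> mspace (X M)) \<and>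
          (\<forall>i. mdist (X M) (f M (xs i)) (xs (Suc i)) < \<delta>) \<longrightarrow>
          (\<exists>x\<in>mspace (X M). \<forall>i. mdist (X M) ((f M ^^ i) x) (xs i) < \<eta>)"
        using sh[rule_format, of M, unfolded shadowing_def, rule_format, OF eta(1)] by blast
      show "\<exists>\<delta>>0. \<forall>xs. (\<forall>i. xs i \<in> inv_lim X g) \<and>
          (\<forall>i. inv_lim_dist X (prod_map f (xs i)) (xs (Suc i)) < \<delta>) \<longrightarrow>
          (\<exists>x\<in>inv_lim X g. \<forall>i. inv_lim_dist X ((prod_map f ^^ i) x) (xs i) < \<epsilon>)"
      proof (intro exI[of _ "\<delta> / (real M + 1)"] conjI allI impI)
        show "\<delta> / (real M + 1) > 0" using d by simp
        fix xs assume xs: "(\<forall>i. xs i \<in> inv_lim X g) \<and>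
          (\<forall>i. inv_lim_dist X (prod_map f (xs i)) (xs (Suc i)) < \<delta> / (real M + 1))"
        have "mdist (X M) (f M (xs i M)) (xs (Suc i) M) < \<delta>" for i
          using pd[of "xs i" "xs (Suc i)" "\<delta> / (real M + 1)" M] xs by simp
        then obtain y where y: "y \<in> mspace (X M)" "\<forall>i. mdist (X M) ((f M ^^ i) y) (xs i M) < \<eta>"
          using d(2)[rule_format, of "\<lambda>i. xs i M", OF conjI] xs inl by blast
        then obtain z where "z \<in> inv_lim X g" "\<forall>p\<in>inv_lim X g. \<forall>i.
         mdist (X M) ((f M ^^ i) y) (p M) < \<eta> \<longrightarrow> inv_lim_dist X ((prod_map f ^^ i) z) p < \<epsilon>"
          using eta(2) by blast
        then show "\<exists>x\<in>inv_lim X g. \<forall>i. inv_lim_dist X ((prod_map f ^^ i) x) (xs i) < \<epsilon>"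
          using y xs by blast
      qed
    qed
  next
    assume sh: "\<forall>m. finite_shadowing (mspace (X m)) (mdist (X m)) (f m)"
    show "finite_shadowing (inv_lim X g) (inv_lim_dist X) (prod_map f)"
      unfolding finite_shadowing_def
    proof (intro allI impI)
      fix \<epsilon> :: real assume e: "\<epsilon> > 0"
      obtain M \<eta> where eta: "\<eta> > 0" "\<forall>y\<in>mspace (X M). \<exists>z\<in>inv_lim X g. \<forall>p\<in>inv_lim X g. \<forall>i.
         mdist (X M) ((f M ^^ i) y) (p M) < \<eta> \<longrightarrow> inv_lim_dist X ((prod_map f ^^ i) z) p < \<epsilon>"
        using key[OF mlc e] by blast
      obtain \<delta> where d: "\<delta> > 0" "\<forall>n xs. (\<forall>i\<le>n. xs i \<in> mspace (X M)) \<and>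
          (\<forall>i<n. mdist (X M) (f M (xs i)) (xs (Suc i)) < \<delta>) \<longrightarrow>
          (\<exists>x\<in>mspace (X M). \<forall>i\<le>n. mdist (X M) ((f M ^^ i) x) (xs i) < \<eta>)"
        using sh[rule_format, of M, unfolded finite_shadowing_def, rule_format, OF eta(1)] by blast
      show "\<exists>\<delta>>0. \<forall>n xs. (\<forall>i\<le>n. xs i \<in> inv_lim X g) \<and>
          (\<forall>i<n. inv_lim_dist X (prod_map f (xs i)) (xs (Suc i)) < \<delta>) \<longrightarrow>
          (\<exists>x\<in>inv_lim X g. \<forall>i\<le>n. inv_lim_dist X ((prod_map f ^^ i) x) (xs i) < \<epsilon>)"
      proof (intro exI[of _ "\<delta> / (real M + 1)"] conjI allI impI)
        show "\<delta> / (real M + 1) > 0" using d by simp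
        fix n xs assume xs: "(\<forall>i\<le>n. xs i \<in> inv_lim X g) \<and>
          (\<forall>i<n. inv_lim_dist X (prod_map f (xs i)) (xs (Suc i)) < \<delta> / (real M + 1))"
        have "mdist (X M) (f M (xs i M)) (xs (Suc i) M) < \<delta>" if "i < n" for i
          using pd[of "xs i" "xs (Suc i)" "\<delta> / (real M + 1)" M] xs that by simp
        moreover have "\<forall>i\<le>n. xs i M \<in> mspace (X M)" using xs inl by blast
        ultimately obtain y where y: "y \<in> mspace (X M)" "\<forall>i\<le>n. mdist (X M) ((f M ^^ i) y) (xs i M) < \<eta>"
          using d(2)[rule_format, of n "\<lambda>i. xs i M", OF conjI] by blast
        then obtain z where "z \<in> inv_lim X g" "\<forall>p\<in>inv_lim X g. \<forall>i.
         mdist (X M) ((f M ^^ i) y) (p M) < \<eta> \<longrightarrow> inv_lim_dist X ((prod_map f ^^ i) z) p < \<epsilon>"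
          using eta(2) by blast
        then show "\<exists>x\<in>inv_lim X g. \<forall>i\<le>n. inv_lim_dist X ((prod_map f ^^ i) x) (xs i) < \<epsilon>"
          using y xs by blast
      qed
    qed
  qed
qed

end
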